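(* Let $A_n=1$ if $n=2^{k+1}-2$ for some integer $k\ge 0$ and $A_n=0$ otherwise, and let $D(n)=\det\left(A_{i+j}\right)_{i,j=0}^{n-1}$ for $n\ge 1$, $D(0)=1$. For $n\ge 0$ with binary expansion $n=[\varepsilon_k\cdots\varepsilon_1\varepsilon_0]_2$ (digits $\varepsilon_i\in\{0,1\}$, with $\varepsilon_i=0$ for $i>k$), let $\delta(n)$ be the number of indices $i\ge 1$ with $\varepsilon_{i+1}\varepsilon_i=10$ (i.e. $\varepsilon_{i+1}=1,\varepsilon_i=0$), plus $1$ if $\varepsilon_1\varepsilon_0=11$ (i.e. $\varepsilon_1=\varepsilon_0=1$). Then for all $n\ge 0$, $$D(n)=(-1)^{\delta(n)}.$$
   Context: Equivalently $A_n=a_{n+1}$ where $a_m=1$ if $m+1$ is a power of $2$ and $a_m=0$ otherwise. For example $\delta(3)=1$, $\delta(4)=1$, $\delta(6)=0$, $\delta(15)=1$. *)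

theory Defs
  imports "Jordan_Normal_Form.Determinant"
begin

definition seqA :: "nat \<Rightarrow> int" where
  "seqA n = (if \<exists>k::nat. n = 2 ^ (k + 1) - 2 then 1 else 0)"

text \<open>Hankel determinant D(n) = det (A (i+j)) for i,j = 0..n-1; the 0x0 determinant is 1.\<close>
definition hankelD :: "nat \<Rightarrow> int" where
  "hankelD n = det (mat n n (\<lambda>(i, j). seqA (i + j)))"

definition digit :: "nat \<Rightarrow> nat \<Rightarrow> nat" where
  "digit n i = (n div 2 ^ i) mod 2"

definition delta :: "nat \<Rightarrow> nat" where
  "delta n = card {i. 1 \<le> i \<and> digit n (i + 1) = 1 \<and> digit n i = 0}
             + (if digit n 1 = 1 \<and> digit n 0 = 1 then 1 else 0)"

end

theory Submission
  imports Defs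
begin

lemma det_sym_perm:
  fixes A :: "int mat"
  assumes A: "A \<in> carrier_mat n n" and p: "p permutes {0..<n}"
  shows "det (mat n n (\<lambda>(i,j). A $$ (p i, p j))) = det A"
proof -
  let ?B = "mat n n (\<lambda>(i,j). A $$ (p i, j))"
  let ?C = "mat n n (\<lambda>(i,j). A $$ (p i, p j))"
  have pn: "\<And>i. i < n \<Longrightarrow> p i < n" using p by (simp add: permutes_in_image)
  have B: "?B \<in> carrier_mat n n" by simp
  have dB: "det ?B = signof p * det A" by (rule det_permute_rows[OF A p])
  have "?C\<^sup>T = mat n n (\<lambda>(i,j). ?B\<^sup>T $$ (p i, j))"
    by (rule eq_matI, auto simp: pn)
  hence "det (?C\<^sup>T) = signof p * det (?B\<^sup>T)"
    using det_permute_rows[of "?B\<^sup>T" n p] p by simp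
  moreover have "det (?C\<^sup>T) = det ?C" by (rule det_transpose[of _ n]) simp
  moreover have "det (?B\<^sup>T) = det ?B" by (rule det_transpose[of _ n]) simp
  ultimately have "det ?C = signof p * det ?B" by simp
  also have "\<dots> = (signof p * signof p) * det A" using dB by simp
  also have "signof p * signof p = (1::int)" by (simp add: sign_def)
  finally show ?thesis by simp
qed

lemma det_lower_left_zero:
  fixes A :: "int mat"
  assumes A: "A \<in> carrier_mat n n" and k: "k \<le> n"
    and z: "\<And>i j. k \<le> i \<Longrightarrow> i < n \<Longrightarrow> j < k \<Longrightarrow> A $$ (i,j) = 0"
  shows "det A = det (mat k k (\<lambda>(i,j). A $$ (i,j))) *
                 det (mat (n-k) (n-k) (\<lambda>(i,j). A $$ (i+k, j+k)))"
proof -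
  let ?A1 = "mat k k (\<lambda>(i,j). A $$ (i,j))"
  let ?A2 = "mat k (n-k) (\<lambda>(i,j). A $$ (i,j+k))"
  let ?A3 = "0\<^sub>m (n-k) k :: int mat"
  let ?A4 = "mat (n-k) (n-k) (\<lambda>(i,j). A $$ (i+k, j+k))"
  have "A = four_block_mat ?A1 ?A2 ?A3 ?A4"
    using A k z by (intro eq_matI) (auto simp: four_block_mat_def Let_def)
  hence "det A = det (four_block_mat ?A1 ?A2 ?A3 ?A4)" by simp
  also have "\<dots> = det ?A1 * det ?A4"
    by (rule det_four_block_mat_lower_left_zero) auto
  finally show ?thesis .
qed

lemma det_zero_col:
  fixes A :: "int mat"
  assumes A: "A \<in> carrier_mat n n" and j: "j < n" and z: "\<And>i. i < n \<Longrightarrow> A $$ (i,j) = 0"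
  shows "det A = 0"
  using laplace_expansion_column[OF A j] z by simp

definition hank :: "nat \<Rightarrow> (nat \<Rightarrow> int) \<Rightarrow> int mat" where
  "hank n s = mat n n (\<lambda>(i,j). s (i+j))"

definition sig :: "nat \<Rightarrow> nat \<Rightarrow> nat" where
  "sig n i = (if i < n then (if i < (n+1) div 2 then 2*i else 2*(i - (n+1) div 2) + 1) else i)"

lemma sig_lo: "i < (n+1) div 2 \<Longrightarrow> sig n i = 2*i"
  unfolding sig_def by auto

lemma sig_hi: "(n+1) div 2 \<le> i \<Longrightarrow> i < n \<Longrightarrow> sig n i = 2*(i - (n+1) div 2) + 1"
  unfolding sig_def by auto

lemma sig_permutes: "sig n permutes {0..<n}"
proof (rule bij_imp_permutes)
  have inj: "inj_on (sig n) {0..<n}"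
  proof (rule inj_onI)
    fix x y assume "x \<in> {0..<n}" "y \<in> {0..<n}" "sig n x = sig n y"
    thus "x = y" unfolding sig_def by (auto split: if_splits) presburger+
  qed
  have sub: "sig n ` {0..<n} \<subseteq> {0..<n}"
    unfolding sig_def by auto
  have "sig n ` {0..<n} = {0..<n}" by (rule endo_inj_surj[OF _ sub inj]) simp
  with inj show "bij_betw (sig n) {0..<n} {0..<n}" by (simp add: bij_betw_def)
  show "\<And>x. x \<notin> {0..<n} \<Longrightarrow> sig n x = x" unfolding sig_def by auto
qed

lemma det_hank_perm: "det (hank n s) = det (mat n n (\<lambda>(i,j). s (sig n i + sig n j)))"
proof -
  have "det (mat n n (\<lambda>(i,j). hank n s $$ (sig n i, sig n j))) = det (hank n s)"
    by (rule det_sym_perm[OF _ sig_permutes]) (simp add: hank_def)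
  moreover have "mat n n (\<lambda>(i,j). hank n s $$ (sig n i, sig n j)) = mat n n (\<lambda>(i,j). s (sig n i + sig n j))"
    using sig_permutes[of n] by (intro eq_matI) (auto simp: hank_def permutes_in_image)
  ultimately show ?thesis by simp
qed

lemma det_hank_even:
  assumes z: "\<And>m. s (2*m+1) = 0"
  shows "det (hank n s) = det (hank ((n+1) div 2) (\<lambda>m. s (2*m))) * det (hank (n div 2) (\<lambda>m. s (2*m+2)))"
proof -
  let ?p = "(n+1) div 2"
  let ?N = "mat n n (\<lambda>(i,j). s (sig n i + sig n j))"
  have "det ?N = det (mat ?p ?p (\<lambda>(i,j). ?N $$ (i,j))) * det (mat (n-?p) (n-?p) (\<lambda>(i,j). ?N $$ (i+?p, j+?p)))"
  proof (rule det_lower_left_zero)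
    fix i j assume "?p \<le> i" "i < n" "j < ?p"
    moreover have "sig n i + sig n j = 2 * (i - ?p + j) + 1" using calculation by (simp add: sig_lo sig_hi)
    ultimately show "?N $$ (i,j) = 0" using z by simp
  qed auto
  moreover have "mat ?p ?p (\<lambda>(i,j). ?N $$ (i,j)) = hank ?p (\<lambda>m. s (2*m))"
    by (intro eq_matI) (auto simp: hank_def sig_lo algebra_simps)
  moreover have "mat (n-?p) (n-?p) (\<lambda>(i,j). ?N $$ (i+?p, j+?p)) = hank (n div 2) (\<lambda>m. s (2*m+2))"
    by (intro eq_matI) (auto simp: hank_def sig_hi algebra_simps)
  ultimately show ?thesis by (simp add: det_hank_perm)
qed

lemma carrier_eq: "m = n \<Longrightarrow> mat m m f \<in> carrier_mat n n" by simp

lemma det_hank_odd_even: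
  assumes z: "\<And>m. s (2*m) = 0"
  shows "det (hank (2*q) s) = (-1)^(q*q) * det (hank q (\<lambda>m. s (2*m+1)))^2"
proof -
  let ?n = "2*q"
  let ?N = "mat ?n ?n (\<lambda>(i,j). s (sig ?n i + sig ?n j))"
  have p: "(2*q+1) div 2 = q" by simp
  have N: "?N \<in> carrier_mat (q+q) (q+q)" by (rule carrier_eq) simp
  let ?M = "mat (q+q) (q+q) (\<lambda>(i,j). ?N $$ (if i < q then i + q else i - q, j))"
  have "det ?N = (-1)^(q*q) * det ?M" by (rule det_swap_rows[OF N])
  also have "det ?M = det (mat q q (\<lambda>(i,j). ?M $$ (i,j))) * det (mat (q+q-q) (q+q-q) (\<lambda>(i,j). ?M $$ (i+q, j+q)))"
  proof (rule det_lower_left_zero)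
    fix i j assume "q \<le> i" "i < q+q" "j < q"
    moreover have "sig ?n (i-q) + sig ?n j = 2 * (i - q + j)" using calculation by (simp add: sig_lo)
    ultimately show "?M $$ (i,j) = 0" using z by simp
  qed auto
  also have "mat q q (\<lambda>(i,j). ?M $$ (i,j)) = hank q (\<lambda>m. s (2*m+1))"
    by (intro eq_matI) (auto simp: hank_def sig_lo sig_hi algebra_simps)
  also have "mat (q+q-q) (q+q-q) (\<lambda>(i,j). ?M $$ (i+q, j+q)) = hank q (\<lambda>m. s (2*m+1))"
    by (intro eq_matI) (auto simp: hank_def sig_lo sig_hi algebra_simps)
  finally show ?thesis by (simp add: det_hank_perm power2_eq_square)
qed

lemma det_hank_odd_odd:
  assumes z: "\<And>m. s (2*m) = 0"
  shows "det (hank (2*q+1) s) = 0"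
proof -
  let ?n = "2*q+1"
  let ?N = "mat ?n ?n (\<lambda>(i,j). s (sig ?n i + sig ?n j))"
  have p: "(2*q+1+1) div 2 = q+1" by simp
  have N: "?N \<in> carrier_mat (q+(q+1)) (q+(q+1))" by (rule carrier_eq) simp
  let ?M = "mat (q+(q+1)) (q+(q+1)) (\<lambda>(i,j). ?N $$ (if i < q then i + (q+1) else i - q, j))"
  have "det ?N = (-1)^(q*(q+1)) * det ?M" by (rule det_swap_rows[OF N])
  also have "det ?M = det (mat q q (\<lambda>(i,j). ?M $$ (i,j))) * det (mat (q+(q+1)-q) (q+(q+1)-q) (\<lambda>(i,j). ?M $$ (i+q, j+q)))"
  proof (rule det_lower_left_zero)
    fix i j assume "q \<le> i" "i < q+(q+1)" "j < q"
    moreover have "sig ?n (i-q) + sig ?n j = 2 * (i - q + j)" using calculation by (simp add: sig_lo)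
    ultimately show "?M $$ (i,j) = 0" using z by simp
  qed auto
  also have "det (mat (q+(q+1)-q) (q+(q+1)-q) (\<lambda>(i,j). ?M $$ (i+q, j+q))) = 0"
  proof (rule det_zero_col[of _ "q+1" 0])
    fix i assume "i < q+1"
    moreover have "sig ?n i + sig ?n q = 2 * (i + q)" using calculation by (simp add: sig_lo)
    ultimately show "mat (q+(q+1)-q) (q+(q+1)-q) (\<lambda>(i,j). ?M $$ (i+q, j+q)) $$ (i, 0) = 0"
      using z[of "i+q"] by (simp add: distrib_left)
  qed auto
  finally show ?thesis by (simp add: det_hank_perm)
qed

lemma det_hank_split0:
  assumes n: "0 < n"
  shows "det (hank n s) = det (hank n (s(0:=0))) + s 0 * det (hank (n-1) (\<lambda>m. s (m+2)))"
proof -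
  let ?A = "hank n s" and ?B = "hank n (s(0:=0))"
  have A: "?A \<in> carrier_mat n n" and B: "?B \<in> carrier_mat n n" by (auto simp: hank_def)
  have del: "\<And>j. mat_delete ?A 0 j = mat_delete ?B 0 j"
    by (intro eq_matI) (auto simp: mat_delete_def hank_def)
  have cof: "\<And>j. cofactor ?A 0 j = cofactor ?B 0 j" unfolding cofactor_def del ..
  have ent: "\<And>j. j < n \<Longrightarrow> ?A $$ (0,j) = ?B $$ (0,j) + (if j = 0 then s 0 else 0)"
    using n by (auto simp: hank_def)
  have "det ?A = (\<Sum>j<n. ?A $$ (0,j) * cofactor ?A 0 j)" by (rule laplace_expansion_row[OF A n])
  also have "\<dots> = (\<Sum>j<n. ?B $$ (0,j) * cofactor ?B 0 j + (if j = 0 then s 0 * cofactor ?A 0 0 else 0))"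
    by (rule sum.cong) (auto simp: ent cof distrib_right)
  also have "\<dots> = det ?B + s 0 * cofactor ?A 0 0"
    using n by (simp add: sum.distrib laplace_expansion_row[OF B n])
  moreover have "mat_delete ?A 0 0 = hank (n-1) (\<lambda>m. s (m+2))"
    by (intro eq_matI) (auto simp: mat_delete_def hank_def)
  ultimately show ?thesis by (simp add: cofactor_def)
qed

definition cc :: "nat \<Rightarrow> int" where
  "cc m = (if \<exists>k::nat. m = 2^k - 1 then 1 else 0)"

lemma pow_pos: "(1::nat) \<le> 2^j" by simp

lemma cc_odd: "cc (2*m+1) = cc m"
proof -
  have "(\<exists>k::nat. 2*m+1 = 2^k - 1) \<longleftrightarrow> (\<exists>k::nat. m = 2^k - 1)"
  proof
    assume "\<exists>k::nat. 2*m+1 = 2^k - 1"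
    then obtain k where k: "2*m+1 = 2^k - 1" by blast
    then obtain j where "k = Suc j" by (cases k) auto
    with k pow_pos[of j] have "m = 2^j - 1" by simp
    thus "\<exists>k::nat. m = 2^k - 1" by blast
  next
    assume "\<exists>k::nat. m = 2^k - 1"
    then obtain j where j: "m = 2^j - 1" by blast
    moreover have "(2::nat)^(Suc j) = 2*2^j" by simp
    ultimately have "2*m+1 = 2^(Suc j) - 1" using pow_pos[of j] by linarith
    thus "\<exists>k::nat. 2*m+1 = 2^k - 1" by blast
  qed
  thus ?thesis unfolding cc_def by simp
qed

lemma cc_even: "cc (2*m) = (if m = 0 then 1 else 0)"
proof -
  have "(\<exists>k::nat. 2*m = 2^k - 1) \<longleftrightarrow> m = 0"
  proof
    assume "\<exists>k::nat. 2*m = 2^k - 1"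
    then obtain k where k: "2*m = 2^k - 1" by blast
    show "m = 0"
    proof (cases k)
      case 0 thus ?thesis using k by simp
    next
      case (Suc j) thus ?thesis using k pow_pos[of j] by simp presburger
    qed
  next
    assume "m = 0" thus "\<exists>k::nat. 2*m = 2^k - 1" by (intro exI[of _ 0]) simp
  qed
  thus ?thesis unfolding cc_def by simp
qed

lemma seqA_cc: "seqA m = cc (m+1)"
proof -
  have "(\<exists>k::nat. m = 2^(k+1) - 2) \<longleftrightarrow> (\<exists>k::nat. m+1 = 2^k - 1)"
  proof
    assume "\<exists>k::nat. m = 2^(k+1) - 2"
    then obtain k where k: "m = 2^(k+1) - 2" by blast
    moreover have "(2::nat)^(k+1) = 2*2^k" by simp
    ultimately have "m+1 = 2^(k+1) - 1" using pow_pos[of k] by linarith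
    thus "\<exists>k::nat. m+1 = 2^k - 1" by blast
  next
    assume "\<exists>k::nat. m+1 = 2^k - 1"
    then obtain k where k: "m+1 = 2^k - 1" by blast
    then obtain j where "k = Suc j" by (cases k) auto
    with k pow_pos[of j] have "m = 2^(j+1) - 2" by simp
    thus "\<exists>k::nat. m = 2^(k+1) - 2" by blast
  qed
  thus ?thesis unfolding cc_def seqA_def by simp
qed

lemma cc_odd': "cc (Suc (2*m)) = cc m" using cc_odd by simp
lemma cc_even': "cc (Suc (Suc (2*m))) = 0" using cc_even[of "Suc m"] by simp

lemma cc_odd'': "cc (Suc (Suc (Suc (2*m)))) = cc (Suc m)" using cc_odd[of "Suc m"] by simp

definition EE :: "nat \<Rightarrow> int" where "EE n = det (hank n cc)"

lemma hankelD_hank: "hankelD n = det (hank n seqA)"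
  unfolding hankelD_def hank_def ..

lemma R1: "hankelD n = EE ((n+1) div 2) * hankelD (n div 2)"
proof -
  have z: "\<And>m. seqA (2*m+1) = 0" using cc_even[of "Suc _"] by (simp add: seqA_cc)
  have e1: "(\<lambda>m. seqA (2*m)) = cc" by (rule ext) (simp add: seqA_cc cc_odd cc_odd')
  have e2: "(\<lambda>m. seqA (2*m+2)) = seqA"
  proof (rule ext)
    fix m
    have "seqA (2*m+2) = cc (2*(m+1)+1)" by (simp add: seqA_cc)
    also have "\<dots> = cc (m+1)" by (rule cc_odd)
    also have "\<dots> = seqA m" by (simp add: seqA_cc)
    finally show "seqA (2*m+2) = seqA m" .
  qed
  show ?thesis using det_hank_even[of seqA n, OF z] unfolding hankelD_hank EE_def e1 e2 .
qed

lemma R2: "EE (2*q) = (-1)^(q*q) * EE q ^ 2"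
proof (cases "q = 0")
  case True thus ?thesis by (simp add: EE_def hank_def)
next
  case False
  have z1: "\<And>m. (cc(0:=0)) (2*m) = 0" by (simp add: cc_even cc_even')
  have e1: "(\<lambda>m. (cc(0:=0)) (2*m+1)) = cc" by (rule ext) (simp add: cc_odd cc_odd')
  have z2: "\<And>m. (\<lambda>m. cc (m+2)) (2*m) = 0"
  proof -
    fix m show "(\<lambda>m. cc (m+2)) (2*m) = 0" using cc_even' by simp
  qed
  have n: "2*q - 1 = 2*(q-1)+1" using False by simp
  have "EE (2*q) = det (hank (2*q) (cc(0:=0))) + cc 0 * det (hank (2*q-1) (\<lambda>m. cc (m+2)))"
    unfolding EE_def by (rule det_hank_split0) (use False in simp)
  hence "EE (2*q) = det (hank (2*q) (cc(0:=0))) + cc 0 * det (hank (2*(q-1)+1) (\<lambda>m. cc (m+2)))"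
    unfolding n .
  also have "det (hank (2*(q-1)+1) (\<lambda>m. cc (m+2))) = 0" by (rule det_hank_odd_odd[of "\<lambda>m. cc (m+2)", OF z2])
  also have "det (hank (2*q) (cc(0:=0))) = (-1)^(q*q) * EE q ^ 2"
    unfolding det_hank_odd_even[of "cc(0:=0)", OF z1] e1 EE_def ..
  finally show ?thesis by simp
qed

lemma R3: "EE (2*q+1) = (-1)^(q*q) * hankelD q ^ 2"
proof -
  have z1: "\<And>m. (cc(0:=0)) (2*m) = 0" by (simp add: cc_even cc_even')
  have z2: "\<And>m. (\<lambda>m. cc (m+2)) (2*m) = 0"
  proof -
    fix m show "(\<lambda>m. cc (m+2)) (2*m) = 0" using cc_even' by simp
  qed
  have e2: "(\<lambda>m. (\<lambda>m. cc (m+2)) (2*m+1)) = seqA"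
  proof (rule ext)
    fix m
    show "(\<lambda>m. cc (m+2)) (2*m+1) = seqA m" using cc_odd'' by (simp add: seqA_cc)
  qed
  have c0: "cc 0 = 1" using cc_even[of 0] by simp
  have "EE (2*q+1) = det (hank (2*q+1) (cc(0:=0))) + cc 0 * det (hank (2*q) (\<lambda>m. cc (m+2)))"
    using det_hank_split0[of "2*q+1" cc] unfolding EE_def by simp
  also have "det (hank (2*q+1) (cc(0:=0))) = 0" by (rule det_hank_odd_odd[of "cc(0:=0)", OF z1])
  also have "det (hank (2*q) (\<lambda>m. cc (m+2))) = (-1)^(q*q) * hankelD q ^ 2"
    unfolding det_hank_odd_even[of "\<lambda>m. cc (m+2)", OF z2] e2 hankelD_hank ..
  finally show ?thesis using c0 by simp
qed


lemma digit_Suc2: "b < 2 \<Longrightarrow> digit (2*m+b) (Suc i) = digit m i"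
proof -
  assume b: "b < 2"
  have "(2*m+b) div 2^(Suc i) = (2*m+b) div 2 div 2^i"
    by (simp add: div_mult2_eq)
  also have "(2*m+b) div 2 = m" using b by simp
  finally show ?thesis unfolding digit_def by simp
qed

lemma digit_big: "m \<le> i \<Longrightarrow> digit m i = 0"
proof -
  assume "m \<le> i"
  hence "(2::nat)^m \<le> 2^i" by (rule power_increasing) simp
  hence "m < 2^i" using less_exp[of m] by linarith
  thus ?thesis unfolding digit_def by simp
qed

definition TT :: "nat \<Rightarrow> nat set" where
  "TT m = {j. digit m (j+1) = 1 \<and> digit m j = 0}"
definition SS :: "nat \<Rightarrow> nat set" where
  "SS m = {i. 1 \<le> i \<and> digit m (i+1) = 1 \<and> digit m i = 0}"

lemma TT_fin: "finite (TT m)"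
proof (rule finite_subset[of _ "{..<m}"])
  show "TT m \<subseteq> {..<m}"
  proof
    fix j assume "j \<in> TT m"
    hence "digit m (j+1) = 1" by (simp add: TT_def)
    hence "\<not> m \<le> j+1" using digit_big[of m "j+1"] by auto
    thus "j \<in> {..<m}" by simp
  qed
qed simp

lemma SS_shift: "b < 2 \<Longrightarrow> SS (2*m+b) = Suc ` TT m"
proof -
  assume b: "b < 2"
  show "SS (2*m+b) = Suc ` TT m"
  proof (intro equalityI subsetI)
    fix i assume "i \<in> SS (2*m+b)"
    then obtain j where j: "i = Suc j" and "digit (2*m+b) (Suc (Suc j)) = 1" "digit (2*m+b) (Suc j) = 0"
      unfolding SS_def by (cases i) auto
    hence "j \<in> TT m" using b by (simp add: TT_def digit_Suc2)
    thus "i \<in> Suc ` TT m" using j by simp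
  next
    fix i assume "i \<in> Suc ` TT m"
    then obtain j where j: "i = Suc j" "j \<in> TT m" by auto
    thus "i \<in> SS (2*m+b)" using b digit_Suc2[of b m "Suc j"] digit_Suc2[of b m j]
      by (simp add: SS_def TT_def)
  qed
qed

lemma TT_split: "TT m = SS m \<union> (if digit m 1 = 1 \<and> digit m 0 = 0 then {0} else {})"
  unfolding TT_def SS_def by (auto simp: Suc_le_eq intro: gr0I)

lemma card_SS_shift: "b < 2 \<Longrightarrow> card (SS (2*m+b)) = card (SS m) + (if digit m 1 = 1 \<and> digit m 0 = 0 then 1 else 0)"
proof -
  assume b: "b < 2"
  have "card (SS (2*m+b)) = card (TT m)" unfolding SS_shift[OF b] by (simp add: card_image)
  also have "\<dots> = card (SS m) + (if digit m 1 = 1 \<and> digit m 0 = 0 then 1 else 0)"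
  proof -
    have fin: "finite (SS m)" using TT_fin[of m] TT_split[of m] by (metis finite_Un)
    have "0 \<notin> SS m" by (simp add: SS_def)
    thus ?thesis using fin by (subst TT_split) auto
  qed
  finally show ?thesis .
qed

lemma delta_SS: "delta n = card (SS n) + (if digit n 1 = 1 \<and> digit n 0 = 1 then 1 else 0)"
  unfolding delta_def SS_def ..

lemma delta_parity:
  assumes b: "b < 2"
  shows "even (delta (2*m+b) + delta m + (2*m+b+1) div 2 div 2)"
proof -
  have d1: "digit (2*m+b) 1 = m mod 2" using digit_Suc2[OF b, of m 0] by (simp add: digit_def)
  have d0: "digit (2*m+b) 0 = b" using b by (simp add: digit_def)
  have e1: "digit m 1 = (m div 2) mod 2" by (simp add: digit_def)
  have e0: "digit m 0 = m mod 2" by (simp add: digit_def)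
  show ?thesis
    unfolding delta_SS card_SS_shift[OF b] d1 d0 e1 e0 using b
    by (auto split: if_splits) presburger+
qed

lemma sq1: "((-1::int)^a)^2 = 1"
  by (simp add: power_mult[symmetric] power_mult_distrib)

lemma sgn_qq: "(-1::int)^(q*q) = (-1)^q"
  by (simp add: minus_one_power_iff)

lemma pm: "even (a+b) \<Longrightarrow> (-1::int)^a = (-1)^b"
  by (auto simp: minus_one_power_iff)

lemma main: "hankelD n = (-1)^delta n \<and> EE n = (-1)^(n div 2)"
proof (induction n rule: less_induct)
  case (less n)
  have E: "EE n = (-1)^(n div 2)"
  proof (cases "n = 0")
    case True thus ?thesis by (simp add: EE_def hank_def)
  next
    case False
    show ?thesis
    proof (cases "even n")
      case True
      then obtain q where q: "n = 2*q" by blast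
      with False have "q < n" by simp
      with less have "EE q = (-1)^(q div 2)" by blast
      thus ?thesis using q R2[of q] by (simp add: sq1 sgn_qq)
    next
      case odd: False
      then obtain q where q: "n = 2*q+1" using oddE by blast
      hence "q < n" by simp
      with less have "hankelD q = (-1)^(delta q)" by blast
      thus ?thesis using q R3[of q] by (simp add: sq1 sgn_qq)
    qed
  qed
  have D: "hankelD n = (-1)^delta n"
  proof (cases "n = 0")
    case True
    have "delta 0 = 0" by (simp add: delta_def digit_def)
    thus ?thesis using True by (simp add: hankelD_def)
  next
    case False
    have E2: "EE ((n+1) div 2) = (-1)^((n+1) div 2 div 2)"
    proof (cases "(n+1) div 2 = n")
      case True thus ?thesis using E by simp
    next
      case False
      hence "(n+1) div 2 < n" by simp
      thus ?thesis using less by blast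
    qed
    have D2: "hankelD (n div 2) = (-1)^delta (n div 2)"
      using less False by simp
    obtain m b where mb: "n = 2*m+b" "b < 2"
      by (metis div_mod_decomp less_numeral_extra(1) mod_less_divisor mult.commute zero_less_numeral)
    have m: "n div 2 = m" using mb by simp
    have par: "even (delta n + delta m + (n+1) div 2 div 2)"
      using delta_parity[OF mb(2), of m] mb(1) by simp
    have "hankelD n = (-1)^((n+1) div 2 div 2 + delta m)"
      using R1[of n] E2 D2 m by (simp add: power_add)
    also have "\<dots> = (-1)^delta n"
    proof (rule pm)
      show "even ((n+1) div 2 div 2 + delta m + delta n)" using par by (simp add: ac_simps)
    qed
    finally show ?thesis .
  qed
  from D E show ?case by blast
qed

theorem corollary2p4:
  fixes n :: nat
  shows "hankelD n = (-1) ^ delta n"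
  using main by blast

end
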